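(* Let $K_\infty$ be the monoid given by the monoid presentation $\langle e,b \mid e^2=e,\ b^2=1\rangle$. The set of all semigroup identities $u\approx v$ (with $u,v$ nonempty words over a countably infinite alphabet) satisfied by $K_\infty$ has no finite basis. That is, there is no finite set $\Sigma$ of identities holding in $K_\infty$ such that every identity holding in $K_\infty$ is a consequence of $\Sigma$.
   Context: $K_\infty$ is the free product, in the category of monoids, of the two-element idempotent monoid $\mathbb{I}_2=\{1,e\}$ (with $e^2=e$) and the two-element group $\mathbb{C}_2=\{1,b\}$ (with $b^2=1$). Every non-identity element of $K_\infty$ has a unique representation as an alternating product of the letters $e$ and $b$. *)

theory Defs
  imports Main
begin

text \<open>Elements are represented by their unique normal forms: alternating words
over the letters E (idempotent e) and B (involution b); the empty word is 1.\<close>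

datatype kletter = E | B

definition kelems :: "kletter list set" where
  "kelems = {w. \<forall>i. Suc i < length w \<longrightarrow> w ! i \<noteq> w ! Suc i}"

fun kpush :: "kletter \<Rightarrow> kletter list \<Rightarrow> kletter list" where
  "kpush E (E # w) = E # w"
| "kpush B (B # w) = w"
| "kpush x w = x # w"

definition kmul :: "kletter list \<Rightarrow> kletter list \<Rightarrow> kletter list" where
  "kmul u v = foldr kpush u v"

text \<open>Words over the countably infinite alphabet nat; an identity is a pair of nonempty words.\<close>
type_synonym sword = "nat list"

definition keval :: "(nat \<Rightarrow> kletter list) \<Rightarrow> sword \<Rightarrow> kletter list" where
  "keval \<phi> w = foldr (\<lambda>x acc. kmul (\<phi> x) acc) w []"

definition K_sat :: "sword \<Rightarrow> sword \<Rightarrow> bool" where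
  "K_sat u v \<longleftrightarrow> (\<forall>\<phi>. (\<forall>x. \<phi> x \<in> kelems) \<longrightarrow> keval \<phi> u = keval \<phi> v)"

definition ssubst :: "(nat \<Rightarrow> sword) \<Rightarrow> sword \<Rightarrow> sword" where
  "ssubst \<sigma> w = concat (map \<sigma> w)"

inductive derivable :: "(sword \<times> sword) set \<Rightarrow> sword \<Rightarrow> sword \<Rightarrow> bool"
  for \<Sigma> :: "(sword \<times> sword) set" where
  ax: "(u, v) \<in> \<Sigma> \<Longrightarrow> derivable \<Sigma> u v"
| refl: "derivable \<Sigma> u u"
| sym: "derivable \<Sigma> u v \<Longrightarrow> derivable \<Sigma> v u"
| trans: "derivable \<Sigma> u v \<Longrightarrow> derivable \<Sigma> v w \<Longrightarrow> derivable \<Sigma> u w"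
| subst: "derivable \<Sigma> u v \<Longrightarrow> (\<forall>x. \<sigma> x \<noteq> []) \<Longrightarrow>
           derivable \<Sigma> (ssubst \<sigma> u) (ssubst \<sigma> v)"
| cong: "derivable \<Sigma> u v \<Longrightarrow> derivable \<Sigma> (p @ u @ q) (p @ v @ q)"

end

theory Submission
  imports Defs "HOL-Library.Multiset"
begin

lemma kelems_Nil[simp]: "[] \<in> kelems"
  by (simp add: kelems_def)

lemma kelems_Cons: "x # w \<in> kelems \<longleftrightarrow> w \<in> kelems \<and> (w \<noteq> [] \<longrightarrow> x \<noteq> hd w)"
proof -
  have "(\<forall>i. Suc i < length (x # w) \<longrightarrow> (x # w) ! i \<noteq> (x # w) ! Suc i) \<longleftrightarrow>
        ((w \<noteq> [] \<longrightarrow> x \<noteq> w ! 0) \<and> (\<forall>j. Suc j < length w \<longrightarrow> w ! j \<noteq> w ! Suc j))"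
    (is "?L \<longleftrightarrow> ?R")
  proof
    assume L: ?L
    show ?R
    proof
      show "w \<noteq> [] \<longrightarrow> x \<noteq> w ! 0" using L[rule_format, of 0] by simp
      show "\<forall>j. Suc j < length w \<longrightarrow> w ! j \<noteq> w ! Suc j"
      proof (intro allI impI)
        fix j assume "Suc j < length w"
        then show "w ! j \<noteq> w ! Suc j" using L[rule_format, of "Suc j"] by simp
      qed
    qed
  next
    assume R: ?R
    show ?L
    proof (intro allI impI)
      fix i assume i: "Suc i < length (x # w)"
      show "(x # w) ! i \<noteq> (x # w) ! Suc i"
      proof (cases i)
        case 0 then show ?thesis using R i by simp
      next
        case (Suc j) then show ?thesis using R i by simp
      qed
    qed
  qed
  then show ?thesis unfolding kelems_def mem_Collect_eq
    by (auto simp only: hd_conv_nth)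
qed

lemma kpush_kelems: "w \<in> kelems \<Longrightarrow> kpush x w \<in> kelems"
proof (cases w)
  case Nil then show ?thesis by (cases x) (auto simp: kelems_Cons)
next
  case (Cons a l)
  assume w: "w \<in> kelems"
  then show ?thesis using Cons by (cases x; cases a) (auto simp: kelems_Cons)
qed

lemma kmul_Nil[simp]: "kmul [] v = v" by (simp add: kmul_def)
lemma kmul_Cons[simp]: "kmul (x # u) v = kpush x (kmul u v)" by (simp add: kmul_def)
lemma kmul_append: "kmul (u @ u') v = kmul u (kmul u' v)" by (simp add: kmul_def)

lemma kmul_kelems: "v \<in> kelems \<Longrightarrow> kmul u v \<in> kelems"
  by (induction u) (auto intro: kpush_kelems)

lemma kpush_cons: "w = [] \<or> hd w \<noteq> x \<Longrightarrow> kpush x w = x # w"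
proof (cases w)
  case (Cons a l)
  assume "w = [] \<or> hd w \<noteq> x"
  then show ?thesis using Cons by (cases x; cases a) auto
qed simp

lemma kmul_Nil_right: "w \<in> kelems \<Longrightarrow> kmul w [] = w"
proof (induction w)
  case Nil then show ?case by simp
next
  case (Cons x w)
  then have "w \<in> kelems" "w = [] \<or> hd w \<noteq> x" by (auto simp: kelems_Cons)
  with Cons show ?case by (simp add: kpush_cons)
qed

lemma kpush_EE: "kpush E (kpush E y) = kpush E y"
proof (cases y)
  case (Cons a l) then show ?thesis by (cases a) auto
qed simp

lemma kpush_BB: "y \<in> kelems \<Longrightarrow> kpush B (kpush B y) = y"
proof (cases y)
  case Nil then show ?thesis by simp
next
  case (Cons a l)
  assume y: "y \<in> kelems"
  show ?thesis
  proof (cases a)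
    case E then show ?thesis using Cons by simp
  next
    case B
    then have "l = [] \<or> hd l \<noteq> B" using y Cons by (auto simp: kelems_Cons)
    then show ?thesis using Cons B by (auto simp: kpush_cons)
  qed
qed

lemma kmul_kpush: "v \<in> kelems \<Longrightarrow> z \<in> kelems \<Longrightarrow> kmul (kpush x v) z = kpush x (kmul v z)"
proof (cases x)
  case E
  assume v: "v \<in> kelems" and z: "z \<in> kelems"
  show ?thesis
  proof (cases "v \<noteq> [] \<and> hd v = E")
    case True
    then obtain v' where "v = E # v'" by (cases v) auto
    then show ?thesis using E by (simp add: kpush_EE)
  next
    case False
    then have "kpush x v = x # v" using E by (intro kpush_cons) auto
    then show ?thesis by simp
  qed
next
  case B
  assume v: "v \<in> kelems" and z: "z \<in> kelems"
  show ?thesis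
  proof (cases "v \<noteq> [] \<and> hd v = B")
    case True
    then obtain v' where vv: "v = B # v'" by (cases v) auto
    with v have "v' \<in> kelems" by (simp add: kelems_Cons)
    then have "kmul v' z \<in> kelems" using z by (simp add: kmul_kelems)
    then show ?thesis using B vv by (simp add: kpush_BB)
  next
    case False
    then have "kpush x v = x # v" using B by (intro kpush_cons) auto
    then show ?thesis by simp
  qed
qed

lemma kmul_assoc: "v \<in> kelems \<Longrightarrow> w \<in> kelems \<Longrightarrow> kmul (kmul u v) w = kmul u (kmul v w)"
proof (induction u)
  case Nil then show ?case by simp
next
  case (Cons x u)
  have "kmul u v \<in> kelems" using Cons.prems by (simp add: kmul_kelems)
  then show ?case using Cons by (simp add: kmul_kpush)
qed

lemma keval_Nil[simp]: "keval \<phi> [] = []" by (simp add: keval_def)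
lemma keval_Cons[simp]: "keval \<phi> (x # w) = kmul (\<phi> x) (keval \<phi> w)" by (simp add: keval_def)

lemma keval_kelems: "keval \<phi> w \<in> kelems"
  by (induction w) (auto intro: kmul_kelems)

lemma keval_append: "(\<forall>x. \<phi> x \<in> kelems) \<Longrightarrow> keval \<phi> (u @ v) = kmul (keval \<phi> u) (keval \<phi> v)"
  by (induction u) (auto simp: kmul_assoc keval_kelems)

lemma keval_ssubst: "(\<forall>x. \<phi> x \<in> kelems) \<Longrightarrow> keval \<phi> (ssubst \<sigma> w) = keval (\<lambda>z. keval \<phi> (\<sigma> z)) w"
  by (induction w) (simp_all add: ssubst_def keval_append)

lemma K_sat_ctx:
  assumes "K_sat s t"
  shows "K_sat (p @ ssubst \<sigma> s @ q) (p @ ssubst \<sigma> t @ q)"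
  unfolding K_sat_def
proof (intro allI impI)
  fix \<phi> :: "nat \<Rightarrow> kletter list" assume h: "\<forall>x. \<phi> x \<in> kelems"
  have "keval (\<lambda>z. keval \<phi> (\<sigma> z)) s = keval (\<lambda>z. keval \<phi> (\<sigma> z)) t"
    using assms unfolding K_sat_def by (simp add: keval_kelems)
  then show "keval \<phi> (p @ ssubst \<sigma> s @ q) = keval \<phi> (p @ ssubst \<sigma> t @ q)"
    using h by (simp add: keval_append keval_ssubst)
qed

lemma K_sat_sym: "K_sat s t \<Longrightarrow> K_sat t s" by (simp add: K_sat_def)

lemma ssubst_single: "ssubst (\<lambda>x. [h x]) w = map h w"
  by (induction w) (auto simp: ssubst_def)

lemma K_sat_map: "K_sat s t \<Longrightarrow> K_sat (map h s) (map h t)"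
  using K_sat_ctx[of s t "[]" "\<lambda>x. [h x]" "[]"] by (simp add: ssubst_single)

lemma keval_filter: "keval \<phi> (filter P w) = keval (\<lambda>x. if P x then \<phi> x else []) w"
  by (induction w) auto

lemma K_sat_filter: "K_sat s t \<Longrightarrow> K_sat (filter P s) (filter P t)"
  unfolding K_sat_def keval_filter
proof (intro allI impI)
  fix \<phi> :: "nat \<Rightarrow> kletter list"
  assume h: "\<forall>\<phi>. (\<forall>x. \<phi> x \<in> kelems) \<longrightarrow> keval \<phi> s = keval \<phi> t" and k: "\<forall>x. \<phi> x \<in> kelems"
  show "keval (\<lambda>x. if P x then \<phi> x else []) s = keval (\<lambda>x. if P x then \<phi> x else []) t"
    by (rule h[rule_format]) (simp add: k)
qed

fun core :: "nat \<Rightarrow> kletter list" where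
  "core 0 = [E]"
| "core (Suc m) = E # B # core m"

definition bp :: "bool \<Rightarrow> kletter list" where "bp b = (if b then [B] else [])"
definition nf :: "bool \<Rightarrow> nat \<Rightarrow> bool \<Rightarrow> kletter list" where "nf a m d = bp a @ core m @ bp d"

lemma core_hd: "core m = E # tl (core m)" by (cases m) auto

lemma core_app: "core m @ r = E # (tl (core m) @ r)"
  by (subst core_hd) simp

lemma kpush_B_core[simp]: "kpush B (core m @ r) = B # core m @ r"
  by (simp add: core_app)

lemma kpush_B_core'[simp]: "kpush B (core m) = B # core m"
  using kpush_B_core[of m "[]"] by simp

lemma kpush_E_core[simp]: "kpush E (core m @ r) = core m @ r"
  by (simp add: core_app)

lemma kmul_core_B: "kmul (core m) (B # r) = core m @ B # r"
  by (induction m) auto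

lemma kmul_core_E: "kmul (core m) (E # r) = core m @ r"
  by (induction m) auto

lemma kmul_core_Nil: "kmul (core m) [] = core m"
  by (induction m) auto

lemma core_B_core: "core m @ B # core k = core (Suc (m + k))"
  by (induction m) auto

lemma core_tl_core: "core m @ tl (core k) = core (m + k)"
proof (cases k)
  case 0 then show ?thesis by simp
next
  case (Suc j) then show ?thesis by (simp add: core_B_core)
qed

lemma kmul_core_core: "kmul (core m) (core k @ r) = core (m + k) @ r"
proof -
  have "kmul (core m) (core k @ r) = kmul (core m) (E # (tl (core k) @ r))" by (simp add: core_app)
  also have "\<dots> = core m @ tl (core k) @ r" by (rule kmul_core_E)
  also have "\<dots> = core (m + k) @ r" using core_tl_core[of m k] by simp
  finally show ?thesis .
qed

lemma kmul_core_Bcore: "kmul (core m) (B # core k @ r) = core (Suc (m + k)) @ r"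
  using kmul_core_B[of m "core k @ r"] core_B_core[of m k] by simp

lemma kmul_bp_core: "kmul (bp a) (core N @ r) = bp a @ core N @ r"
  by (cases a) (auto simp: bp_def)

lemma kmul_nf: "kmul (nf a m d) (nf g k e) = nf a (m + k + (if d = g then 0 else 1)) e"
proof -
  have step1: "kmul (core m) (kmul (bp d) (nf g k e)) = core (m + k + (if d = g then 0 else 1)) @ bp e"
    by (cases d; cases g) (simp_all add: nf_def bp_def kmul_core_core kmul_core_Bcore)
  have "kmul (nf a m d) (nf g k e) = kmul (bp a) (kmul (core m) (kmul (bp d) (nf g k e)))"
    unfolding nf_def by (simp add: kmul_append)
  also have "\<dots> = nf a (m + k + (if d = g then 0 else 1)) e"
    using step1 by (simp add: kmul_bp_core nf_def)
  finally show ?thesis .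
qed

lemma core_ne[simp]: "core m \<noteq> []" by (cases m) auto
lemma nf_ne: "nf a m d \<noteq> []" by (simp add: nf_def)
lemma E_in_nf: "E \<in> set (nf a m d)" by (simp add: nf_def core_app)

lemma hd_nf: "hd (nf a m d) = (if a then B else E)"
  by (simp add: nf_def bp_def core_app)

lemma kelems_cases:
  assumes "w \<in> kelems"
  shows "w = [] \<or> w = [B] \<or> (\<exists>a m d. w = nf a m d)"
  using assms
proof (induction w)
  case Nil then show ?case by simp
next
  case (Cons x w)
  then have w: "w \<in> kelems" and xh: "w \<noteq> [] \<longrightarrow> x \<noteq> hd w" by (auto simp: kelems_Cons)
  from Cons.IH[OF w] consider "w = []" | "w = [B]" | a m d where "w = nf a m d" by blast
  then show ?case
  proof cases
    case 1
    show ?thesis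
    proof (cases x)
      case E
      then have "x # w = nf False 0 False" using 1 by (simp add: nf_def bp_def)
      then show ?thesis by blast
    next
      case B then show ?thesis using 1 by simp
    qed
  next
    case 2 then have "x = E" using xh by (cases x) auto
    then have "x # w = nf False 0 True" using 2 by (simp add: nf_def bp_def)
    then show ?thesis by blast
  next
    case (3 a m d)
    show ?thesis
    proof (cases a)
      case True
      then have "x = E" using xh 3 hd_nf[of a m d] nf_ne[of a m d] by (cases x) auto
      then have "x # w = nf False (Suc m) d" using 3 True by (simp add: nf_def bp_def)
      then show ?thesis by blast
    next
      case False
      then have "x = B" using xh 3 hd_nf[of a m d] nf_ne[of a m d] by (cases x) auto
      then have "x # w = nf True m d" using 3 False by (simp add: nf_def bp_def)
      then show ?thesis by blast
    qed
  qed
qed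

lemma kmul_B_nf[simp]: "kpush B (nf a m d) = nf (\<not> a) m d"
  by (cases a) (auto simp: nf_def bp_def)

lemma kmul_nf_B: "kmul (nf a m d) [B] = nf a m (\<not> d)"
proof -
  have "kmul (nf a m d) [B] = kmul (bp a) (kmul (core m) (kmul (bp d) [B]))"
    unfolding nf_def by (simp add: kmul_append)
  also have "kmul (core m) (kmul (bp d) [B]) = core m @ bp (\<not> d)"
    by (cases d) (simp_all add: bp_def kmul_core_Nil kmul_core_B[of m "[]", simplified])
  finally show ?thesis using kmul_bp_core[of a m "bp (\<not> d)"] by (simp add: nf_def)
qed

lemma kmul_nf_Nil: "kmul (nf a m d) [] = nf a m d"
proof -
  have "kmul (nf a m d) [] = kmul (bp a) (kmul (core m) (kmul (bp d) []))"
    unfolding nf_def by (simp add: kmul_append)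
  also have "kmul (core m) (kmul (bp d) []) = core m @ bp d"
    by (cases d) (simp_all add: bp_def kmul_core_Nil kmul_core_B[of m "[]", simplified])
  finally show ?thesis using kmul_bp_core[of a m "bp d"] by (simp add: nf_def)
qed

lemma sandwich:
  assumes "A \<in> kelems"
  shows "\<exists>c. \<forall>N m. kmul (nf a N d) (kmul A (nf a m d)) = nf a (N + m + c) d"
proof -
  from kelems_cases[OF assms] consider "A = []" | "A = [B]" | g k e where "A = nf g k e" by blast
  then show ?thesis
  proof cases
    case 1 then show ?thesis
      by (rule_tac x="if d = a then 0 else 1" in exI) (simp add: kmul_nf)
  next
    case 2 then show ?thesis
      by (rule_tac x="if d = (\<not> a) then 0 else 1" in exI) (simp add: kmul_nf)
  next
    case (3 g k e)
    then show ?thesis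
      by (rule_tac x="k + (if d = g then 0 else 1) + (if e = a then 0 else 1)" in exI) (simp add: kmul_nf ac_simps)
  qed
qed

lemma separator:
  assumes "A \<in> kelems" "C \<in> kelems"
  shows "kmul (nf a m d) (kmul A (kmul (nf a m d) (kmul C (nf a m d)))) =
         kmul (nf a m d) (kmul C (kmul (nf a m d) (kmul A (nf a m d))))"
proof -
  obtain cA where hA: "\<And>N m. kmul (nf a N d) (kmul A (nf a m d)) = nf a (N + m + cA) d"
    using sandwich[OF assms(1)] by blast
  obtain cC where hC: "\<And>N m. kmul (nf a N d) (kmul C (nf a m d)) = nf a (N + m + cC) d"
    using sandwich[OF assms(2)] by blast
  show ?thesis by (simp add: hA hC add.commute add.left_commute)
qed

lemma E_kmul:
  assumes "A \<in> kelems" "C \<in> kelems"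
  shows "E \<in> set (kmul A C) \<longleftrightarrow> E \<in> set A \<or> E \<in> set C"
proof -
  from kelems_cases[OF assms(1)] consider "A = []" | "A = [B]" | g k e where "A = nf g k e" by blast
  then show ?thesis
  proof cases
    case 1 then show ?thesis by simp
  next
    case 2
    from kelems_cases[OF assms(2)] consider "C = []" | "C = [B]" | g k e where "C = nf g k e" by blast
    then show ?thesis using 2 by cases (auto simp: E_in_nf)
  next
    case (3 g k e)
    from kelems_cases[OF assms(2)] consider "C = []" | "C = [B]" | g' k' e' where "C = nf g' k' e'" by blast
    then show ?thesis using 3 by cases (auto simp: kmul_nf_B kmul_nf_Nil kmul_nf E_in_nf)
  qed
qed

lemma E_keval:
  assumes "\<forall>x. \<phi> x \<in> kelems"
  shows "E \<in> set (keval \<phi> w) \<longleftrightarrow> (\<exists>x\<in>set w. E \<in> set (\<phi> x))"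
  using assms by (induction w) (auto simp: E_kmul keval_kelems)

lemma unit_cases: "A \<in> kelems \<Longrightarrow> E \<notin> set A \<Longrightarrow> A = [] \<or> A = [B]"
  using kelems_cases E_in_nf by blast

lemma keval_units:
  assumes "\<forall>x\<in>set w. \<phi> x = [] \<or> \<phi> x = [B]"
  shows "keval \<phi> w = (if even (length (filter (\<lambda>x. \<phi> x = [B]) w)) then [] else [B])"
  using assms by (induction w) auto

definition SS :: "nat \<Rightarrow> nat list" where "SS n = [0..<n]"
definition uu :: "nat \<Rightarrow> nat list" where "uu n = SS n @ rev (SS n) @ SS n @ SS n"
definition uu' :: "nat \<Rightarrow> nat list" where "uu' n = SS n @ SS n @ rev (SS n) @ SS n"

lemma K_sat_uu: "K_sat (uu n) (uu' n)"
  unfolding K_sat_def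
proof (intro allI impI)
  fix \<phi> :: "nat \<Rightarrow> kletter list" assume h: "\<forall>x. \<phi> x \<in> kelems"
  define X where "X = keval \<phi> (SS n)"
  define Y where "Y = keval \<phi> (rev (SS n))"
  have L: "keval \<phi> (uu n) = kmul X (kmul Y (kmul X X))"
    unfolding uu_def X_def Y_def using h by (simp add: keval_append)
  have R: "keval \<phi> (uu' n) = kmul X (kmul X (kmul Y X))"
    unfolding uu'_def X_def Y_def using h by (simp add: keval_append)
  have XK: "X \<in> kelems" "Y \<in> kelems" unfolding X_def Y_def by (simp_all add: keval_kelems)
  show "keval \<phi> (uu n) = keval \<phi> (uu' n)"
  proof (cases "E \<in> set X")
    case True
    then obtain a m d where X: "X = nf a m d" using kelems_cases[OF XK(1)] by auto
    have "kmul X (kmul Y (kmul X (kmul [] X))) = kmul X (kmul [] (kmul X (kmul Y X)))"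
      unfolding X by (rule separator) (simp_all add: XK[unfolded X])
    then show ?thesis using L R by simp
  next
    case False
    then have "\<forall>x\<in>set (SS n). E \<notin> set (\<phi> x)" using E_keval[OF h] unfolding X_def by blast
    then have u: "\<forall>x\<in>set (SS n). \<phi> x = [] \<or> \<phi> x = [B]" using unit_cases h by blast
    then have "Y = X" unfolding X_def Y_def
      by (simp add: keval_units rev_filter[symmetric])
    then show ?thesis using L R by simp
  qed
qed

lemma uu_ne: "2 \<le> n \<Longrightarrow> uu n \<noteq> uu' n"
proof
  assume n: "2 \<le> n" and eq: "uu n = uu' n"
  have "uu n ! n = n - 1" using n unfolding uu_def SS_def by (simp add: nth_append rev_nth)
  moreover have "uu' n ! n = 0" using n unfolding uu'_def SS_def by (simp add: nth_append)
  ultimately show False using eq n by simp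
qed

lemma kpush_B_EB: "kpush B (concat (replicate k [E,B])) = B # concat (replicate k [E,B])"
  by (cases k) auto

lemma keval_cnt: "keval (\<lambda>y. if y = x then [E,B] else []) w = concat (replicate (count_list w x) [E,B])"
  by (induction w) (auto simp: kpush_B_EB)

lemma K_sat_test: "K_sat u v \<Longrightarrow> (\<forall>x. \<phi> x \<in> kelems) \<Longrightarrow> keval \<phi> u = keval \<phi> v"
  unfolding K_sat_def by blast

lemma K_sat_count: "K_sat u v \<Longrightarrow> count_list u x = count_list v x"
proof -
  assume uv: "K_sat u v"
  have "\<forall>y. (if y = x then [E,B] else []) \<in> kelems" by (simp add: kelems_Cons)
  with uv have "keval (\<lambda>y. if y = x then [E,B] else []) u = keval (\<lambda>y. if y = x then [E,B] else []) v"
    by (rule K_sat_test)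
  then have "length (concat (replicate (count_list u x) [E,B])) = length (concat (replicate (count_list v x) [E,B]))"
    by (simp only: keval_cnt)
  then show ?thesis by (simp add: length_concat sum_list_replicate)
qed

lemma K_sat_mset: "K_sat u v \<Longrightarrow> mset u = mset v"
  by (rule multiset_eqI) (simp add: count_mset K_sat_count)

definition P0 :: "nat list" where "P0 = [0,1,1,0,0,1,0,1]"
definition P0' :: "nat list" where "P0' = [0,1,0,1,1,0,0,1]"
definition C0 :: "nat list list" where "C0 = [[0,1,1,0,0,1,0,1], [0,1,0,0,1,1,0,1], [0,1,0,1,1,0,0,1], [0,1,1,0,1,0,0,1]]"

definition t1 :: "nat \<Rightarrow> kletter list" where "t1 x = (if x = 0 then [E] else [B,E,B])"
definition t2 :: "nat \<Rightarrow> kletter list" where "t2 x = (if x = 0 then [B] else [E])"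
definition t3 :: "nat \<Rightarrow> kletter list" where "t3 x = (if x = 0 then [E] else [B])"

lemma F0_check:
  "\<forall>v\<in>set (List.n_lists 8 [0::nat,1]).
     keval t1 v = keval t1 P0 \<and> keval t2 v = keval t2 P0 \<and> keval t3 v = keval t3 P0 \<longrightarrow> v \<in> set C0"
  by code_simp

lemma F0c:
  assumes "K_sat P0 v"
  shows "v \<in> set C0"
proof -
  have m: "mset v = mset P0" using K_sat_mset[OF assms] by simp
  then have "length v = length P0" by (metis size_mset)
  then have "length v = 8" by (simp add: P0_def)
  moreover have "set v = set P0" using m by (metis set_mset_mset)
  then have "set v \<subseteq> set [0,1]" by (simp add: P0_def)
  ultimately have "v \<in> set (List.n_lists 8 [0::nat,1])" by (simp add: set_n_lists)
  moreover have "\<forall>x. t1 x \<in> kelems" "\<forall>x. t2 x \<in> kelems" "\<forall>x. t3 x \<in> kelems"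
    by (simp_all add: t1_def t2_def t3_def kelems_Cons)
  ultimately show ?thesis using F0_check K_sat_test[OF assms] by metis
qed

definition rn :: "nat \<Rightarrow> nat \<Rightarrow> nat \<Rightarrow> nat" where "rn a b x = (if x = 0 then a else b)"

lemma F0g:
  assumes ab: "a \<noteq> b" and h: "K_sat (map (rn a b) P0) v"
  shows "v \<in> map (rn a b) ` set C0"
proof -
  define g where "g x = (if x = a then 0 else (1::nat))" for x
  have "set v = set (map (rn a b) P0)" using K_sat_mset[OF h] by (metis set_mset_mset)
  then have sv: "set v \<subseteq> {a, b}" by (auto simp: P0_def rn_def)
  have "map g (map (rn a b) P0) = P0" using ab by (simp add: P0_def rn_def g_def)
  then have "K_sat P0 (map g v)" using K_sat_map[OF h, of g] by simp
  then have "map g v \<in> set C0" by (rule F0c)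
  moreover have "map (rn a b) (map g v) = v"
  proof -
    have "\<forall>x\<in>set v. rn a b (g x) = x" using sv ab by (auto simp: rn_def g_def)
    then show ?thesis by (induction v) auto
  qed
  ultimately show ?thesis by (metis image_eqI)
qed

function merge3 :: "nat \<Rightarrow> nat \<Rightarrow> nat \<Rightarrow> nat list \<Rightarrow> nat list \<Rightarrow> nat list \<Rightarrow> nat list" where
  "merge3 a b c xs ys zs =
    (if xs \<noteq> [] \<and> ys \<noteq> [] \<and> hd xs = a \<and> hd ys = a then a # merge3 a b c (tl xs) (tl ys) zs
     else if xs \<noteq> [] \<and> zs \<noteq> [] \<and> hd xs = b \<and> hd zs = b then b # merge3 a b c (tl xs) ys (tl zs)
     else if ys \<noteq> [] \<and> zs \<noteq> [] \<and> hd ys = c \<and> hd zs = c then c # merge3 a b c xs (tl ys) (tl zs)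
     else [])"
  by pat_completeness auto
termination
  by (relation "measure (\<lambda>(a,b,c,xs,ys,zs). length xs + length ys + length zs)") (auto simp: neq_Nil_conv)

declare merge3.simps[simp del]

definition pj :: "nat set \<Rightarrow> nat list \<Rightarrow> nat list" where "pj X w = filter (\<lambda>x. x \<in> X) w"

lemma merge3_correct:
  assumes "a \<noteq> b" "a \<noteq> c" "b \<noteq> c" "set v \<subseteq> {a,b,c}"
  shows "merge3 a b c (pj {a,b} v) (pj {a,c} v) (pj {b,c} v) = v"
  using assms(4)
proof (induction v)
  case Nil then show ?case by (simp add: pj_def merge3.simps)
next
  case (Cons x v)
  then have IH: "merge3 a b c (pj {a,b} v) (pj {a,c} v) (pj {b,c} v) = v" by simp
  have "x = a \<or> x = b \<or> x = c" using Cons.prems by auto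
  then show ?case
  proof (elim disjE)
    assume "x = a" then show ?thesis using assms IH by (subst merge3.simps) (simp add: pj_def)
  next
    assume x: "x = b"
    show ?thesis using assms IH x
      by (subst merge3.simps) (cases "filter (\<lambda>x. x = a \<or> x = c) v"; simp add: pj_def)
  next
    assume x: "x = c"
    show ?thesis using assms IH x
      by (subst merge3.simps) (cases "filter (\<lambda>x. x = a \<or> x = b) v"; simp add: pj_def)
  qed
qed

definition U3 :: "nat list" where "U3 = [0,1,2,2,1,0,0,1,2,0,1,2]"
definition U3' :: "nat list" where "U3' = [0,1,2,0,1,2,2,1,0,0,1,2]"

definition u1 :: "nat \<Rightarrow> kletter list" where "u1 x = (if x = 0 then [B] else if x = 1 then [E] else [B])"
definition u2 :: "nat \<Rightarrow> kletter list" where "u2 x = (if x = 0 then [E] else if x = 1 then [B,E] else [B,E,B])"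

lemma F1_check:
  "\<forall>x\<in>set (map (map (rn 0 1)) C0). \<forall>y\<in>set (map (map (rn 0 2)) C0). \<forall>z\<in>set (map (map (rn 1 2)) C0).
     pj {0,1} (merge3 0 1 2 x y z) = x \<and> pj {0,2} (merge3 0 1 2 x y z) = y \<and> pj {1,2} (merge3 0 1 2 x y z) = z \<and>
     keval u1 (merge3 0 1 2 x y z) = keval u1 U3 \<and> keval u2 (merge3 0 1 2 x y z) = keval u2 U3
     \<longrightarrow> merge3 0 1 2 x y z = U3 \<or> merge3 0 1 2 x y z = U3'"
  by code_simp

lemma pj_K: "K_sat u v \<Longrightarrow> K_sat (pj X u) (pj X v)"
  unfolding pj_def by (rule K_sat_filter)

lemma F1c:
  assumes h: "K_sat U3 v"
  shows "v = U3 \<or> v = U3'"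
proof -
  have "set v = set U3" using K_sat_mset[OF h] by (metis set_mset_mset)
  then have sv: "set v \<subseteq> {0,1,2}" by (auto simp: U3_def)
  have e1: "pj {0,1} U3 = map (rn 0 1) P0" and e2: "pj {0,2} U3 = map (rn 0 2) P0"
    and e3: "pj {1,2} U3 = map (rn 1 2) P0"
    by (simp_all add: pj_def U3_def P0_def rn_def)
  have "K_sat (map (rn 0 1) P0) (pj {0,1} v)" using pj_K[OF h, of "{0,1}"] unfolding e1 .
  then have x: "pj {0,1} v \<in> set (map (map (rn 0 1)) C0)" using F0g[of 0 1] by simp
  have "K_sat (map (rn 0 2) P0) (pj {0,2} v)" using pj_K[OF h, of "{0,2}"] unfolding e2 .
  then have y: "pj {0,2} v \<in> set (map (map (rn 0 2)) C0)" using F0g[of 0 2] by simp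
  have "K_sat (map (rn 1 2) P0) (pj {1,2} v)" using pj_K[OF h, of "{1,2}"] unfolding e3 .
  then have z: "pj {1,2} v \<in> set (map (map (rn 1 2)) C0)" using F0g[of 1 2] by simp
  have vm: "merge3 0 1 2 (pj {0,1} v) (pj {0,2} v) (pj {1,2} v) = v"
    using merge3_correct[of 0 1 2 v] sv by simp
  have "\<forall>x. u1 x \<in> kelems" "\<forall>x. u2 x \<in> kelems" by (simp_all add: u1_def u2_def kelems_Cons)
  then have "keval u1 v = keval u1 U3" "keval u2 v = keval u2 U3"
    using K_sat_test[OF h] by metis+
  then show ?thesis using F1_check x y z vm by metis
qed

definition kprod :: "kletter list list \<Rightarrow> kletter list" where "kprod L = foldr kmul L []"

definition Krel :: "nat list list \<Rightarrow> nat list list \<Rightarrow> bool" where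
  "Krel Bs Bt \<longleftrightarrow> (\<forall>F. (\<forall>w. F w \<in> kelems) \<longrightarrow> F [] = [] \<longrightarrow> kprod (map F Bs) = kprod (map F Bt))"

lemma keval_kprod: "keval (\<lambda>z. F (\<tau> z)) s = kprod (map F (map \<tau> s))"
  by (induction s) (simp_all add: kprod_def)

lemma K_sat_Krel: "K_sat s t \<Longrightarrow> Krel (map \<tau> s) (map \<tau> t)"
  unfolding Krel_def
proof (intro allI impI)
  fix F :: "nat list \<Rightarrow> kletter list" assume st: "K_sat s t" and F: "\<forall>w. F w \<in> kelems"
  then have "keval (\<lambda>z. F (\<tau> z)) s = keval (\<lambda>z. F (\<tau> z)) t" by (intro K_sat_test) auto
  then show "kprod (map F (map \<tau> s)) = kprod (map F (map \<tau> t))" by (simp only: keval_kprod)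
qed

lemma kprod_filter: "F [] = [] \<Longrightarrow> kprod (map F (filter (\<lambda>B. B \<noteq> []) L)) = kprod (map F L)"
  by (induction L) (auto simp: kprod_def)

lemma Krel_filter: "Krel Bs Bt \<Longrightarrow> Krel (filter (\<lambda>B. B \<noteq> []) Bs) (filter (\<lambda>B. B \<noteq> []) Bt)"
  unfolding Krel_def by (simp add: kprod_filter)

lemma E_kprod: "\<forall>x\<in>set L. x \<in> kelems \<Longrightarrow> E \<in> set (kprod L) \<longleftrightarrow> (\<exists>x\<in>set L. E \<in> set x)"
proof (induction L)
  case Nil then show ?case by (simp add: kprod_def)
next
  case (Cons x L)
  have "kprod L \<in> kelems" unfolding kprod_def by (induction L) (auto intro: kmul_kelems)
  then show ?case using Cons by (simp add: kprod_def E_kmul)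
qed

lemma Krel_set:
  assumes "Krel Bs Bt" "[] \<notin> set Bt"
  shows "set Bt \<subseteq> set Bs"
proof
  fix B assume B: "B \<in> set Bt"
  show "B \<in> set Bs"
  proof (rule ccontr)
    assume nB: "B \<notin> set Bs"
    define F where "F w = (if w = B then [E] else [])" for w
    have Fk: "\<forall>w. F w \<in> kelems" "F [] = []" using B assms(2) by (auto simp: F_def kelems_Cons)
    then have eq: "kprod (map F Bs) = kprod (map F Bt)" using assms(1) unfolding Krel_def by blast
    have "\<forall>x\<in>set (map F Bs). x \<in> kelems" "\<forall>x\<in>set (map F Bt). x \<in> kelems" using Fk by auto
    moreover have "\<not> (\<exists>x\<in>set (map F Bs). E \<in> set x)" using nB by (auto simp: F_def)
    moreover have "\<exists>x\<in>set (map F Bt). E \<in> set x" using B by (auto simp: F_def)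
    ultimately show False using eq E_kprod by metis
  qed
qed

fun decomps :: "'a list \<Rightarrow> 'a list list list" where
  "decomps [] = [[]]"
| "decomps (x # xs) = concat (map (\<lambda>d. case d of [] \<Rightarrow> [[[x]]] | b # bs \<Rightarrow> [[x] # b # bs, (x # b) # bs]) (decomps xs))"

lemma decomps_complete: "concat Bs = f \<Longrightarrow> [] \<notin> set Bs \<Longrightarrow> Bs \<in> set (decomps f)"
proof (induction f arbitrary: Bs)
  case Nil then show ?case by (cases Bs) auto
next
  case (Cons x xs)
  have mem: "\<And>d y. d \<in> set (decomps xs) \<Longrightarrow> y \<in> set (case d of [] \<Rightarrow> [[[x]]] | b # bs \<Rightarrow> [[x] # b # bs, (x # b) # bs]) \<Longrightarrow> y \<in> set (decomps (x # xs))"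
    by auto
  obtain B1 rest where Bs: "Bs = B1 # rest" using Cons.prems by (cases Bs) auto
  with Cons.prems obtain B1' where B1: "B1 = x # B1'" by (cases B1) auto
  show ?case
  proof (cases "B1' = []")
    case True
    then have "rest \<in> set (decomps xs)" using Cons Bs B1 by auto
    moreover have "[x] # rest \<in> set (case rest of [] \<Rightarrow> [[[x]]] | b # bs \<Rightarrow> [[x] # b # bs, (x # b) # bs])"
      by (cases rest) auto
    ultimately show ?thesis using mem[of rest Bs] Bs B1 True by simp
  next
    case False
    then have "B1' # rest \<in> set (decomps xs)" using Cons Bs B1 by (intro Cons.IH) auto
    moreover have "(x # B1') # rest \<in> set (case B1' # rest of [] \<Rightarrow> [[[x]]] | b # bs \<Rightarrow> [[x] # b # bs, (x # b) # bs])"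
      by simp
    ultimately show ?thesis using mem[of "B1' # rest" Bs] Bs B1 by simp
  qed
qed

function parses :: "'a list list \<Rightarrow> 'a list \<Rightarrow> 'a list list list" where
  "parses bl g = (if g = [] then [[]] else
     concat (map (\<lambda>b. if b \<noteq> [] \<and> take (length b) g = b then map (Cons b) (parses bl (drop (length b) g)) else []) bl))"
  by pat_completeness auto
termination
  by (relation "measure (\<lambda>(bl, g). length g)") auto

declare parses.simps[simp del]

lemma parses_complete: "concat Bt = g \<Longrightarrow> [] \<notin> set Bt \<Longrightarrow> set Bt \<subseteq> set bl \<Longrightarrow> Bt \<in> set (parses bl g)"
proof (induction Bt arbitrary: g)
  case Nil then show ?case by (simp add: parses.simps)
next
  case (Cons b rest)
  then have g: "g = b @ concat rest" "b \<noteq> []" "b \<in> set bl" by auto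
  have "rest \<in> set (parses bl (concat rest))" using Cons by auto
  then show ?case using g by (subst parses.simps) force
qed

definition keyf :: "nat list \<Rightarrow> nat" where
  "keyf bk = (if hd bk = 1 then 4 else 0) + (if last bk = 1 then 2 else 0) + (if 3 \<le> length bk then 1 else 0)"

definition Tf :: "kletter list \<Rightarrow> kletter list \<Rightarrow> kletter list list \<Rightarrow> nat list \<Rightarrow> kletter list" where
  "Tf p0 p1 X bk = (if bk = [] then [] else if length bk = 1 then (if hd bk = 0 then p0 else p1) else X ! keyf bk)"

definition hdT :: "nat list \<Rightarrow> nat list \<Rightarrow> kletter list" where
  "hdT B0 bk = (if bk = [] then [] else if bk = B0 then [B,E] else [E])"
definition lastT :: "nat list \<Rightarrow> nat list \<Rightarrow> kletter list" where
  "lastT B0 bk = (if bk = [] then [] else if bk = B0 then [E,B] else [E])"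

definition XT1 :: "kletter list list" where "XT1 = [[E],[E],[B],[B],[B,E],[B,E],[E,B],[E,B]]"
definition XT2 :: "kletter list list" where "XT2 = replicate 8 [E,B]"
definition XT3 :: "kletter list list" where "XT3 = [[],[],[],[],[B],[E],[],[]]"

definition tests :: "nat list list \<Rightarrow> (nat list \<Rightarrow> kletter list) list" where
  "tests Bs = [Tf [E,B] [B] XT1, Tf [] [B] XT2, Tf [] [] XT3, hdT (hd Bs), lastT (last Bs)]"

lemma keyf_lt: "keyf bk < 8" by (simp add: keyf_def)

lemma Tf_ok: "set X \<subseteq> kelems \<Longrightarrow> length X = 8 \<Longrightarrow> p0 \<in> kelems \<Longrightarrow> p1 \<in> kelems \<Longrightarrow>
   Tf p0 p1 X [] = [] \<and> (\<forall>w. Tf p0 p1 X w \<in> kelems)"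
  using keyf_lt by (auto simp: Tf_def)

lemma tests_ok: "F \<in> set (tests Bs) \<Longrightarrow> F [] = [] \<and> (\<forall>w. F w \<in> kelems)"
proof -
  assume F: "F \<in> set (tests Bs)"
  have k: "set XT1 \<subseteq> kelems" "set XT2 \<subseteq> kelems" "set XT3 \<subseteq> kelems"
    by (auto simp: XT1_def XT2_def XT3_def kelems_Cons)
  have l: "length XT1 = 8" "length XT2 = 8" "length XT3 = 8" by (simp_all add: XT1_def XT2_def XT3_def)
  have e: "[E,B] \<in> kelems" "[B] \<in> kelems" "[B,E] \<in> kelems" "[E] \<in> kelems" by (simp_all add: kelems_Cons)
  show ?thesis using F Tf_ok[OF k(1) l(1)] Tf_ok[OF k(2) l(2)] Tf_ok[OF k(3) l(3)] e
    by (auto simp: tests_def hdT_def lastT_def)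
qed

lemma F3_check:
  "\<forall>i\<in>set [0..<9]. \<forall>j\<in>set [0..<9]. (i + j \<le> 8 \<and> take i P0 = take i P0' \<and> drop (8 - j) P0 = drop (8 - j) P0') \<longrightarrow>
    (\<forall>Bs\<in>set (decomps (drop i (take (8 - j) P0))). \<forall>Bt\<in>set (parses (remdups Bs) (drop i (take (8 - j) P0'))).
       (\<exists>bk\<in>set Bs. 2 \<le> length bk) \<longrightarrow> (\<exists>F\<in>set (tests Bs). kprod (map F Bs) \<noteq> kprod (map F Bt)))"
  by code_simp

lemma concat_filter_ne: "concat (filter (\<lambda>x. x \<noteq> []) xs) = concat xs"
  by (induction xs) auto

lemma split3:
  assumes "p @ X @ q = P"
  shows "p = take (length p) P \<and> X = drop (length p) (take (length P - length q) P) \<and>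
         q = drop (length P - length q) P \<and> length p + length q \<le> length P"
  using assms[symmetric] by simp

lemma F3c:
  assumes h1: "p @ concat Bs @ q = P0" and h2: "p @ concat Bt @ q = P0'" and kr: "Krel Bs Bt"
  shows "\<forall>bk\<in>set Bs. length bk \<le> 1"
proof (rule ccontr)
  assume "\<not> (\<forall>bk\<in>set Bs. length bk \<le> 1)"
  then obtain bk where bk: "bk \<in> set Bs" "2 \<le> length bk" by force
  define Bs1 where "Bs1 = filter (\<lambda>x. x \<noteq> []) Bs"
  define Bt1 where "Bt1 = filter (\<lambda>x. x \<noteq> []) Bt"
  have k1: "Krel Bs1 Bt1" unfolding Bs1_def Bt1_def by (rule Krel_filter[OF kr])
  have c1: "concat Bs1 = concat Bs" "concat Bt1 = concat Bt" unfolding Bs1_def Bt1_def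
    by (simp_all add: concat_filter_ne)
  have ne: "[] \<notin> set Bs1" "[] \<notin> set Bt1" unfolding Bs1_def Bt1_def by auto
  define i where "i = length p"
  define j where "j = length q"
  have l8: "length P0 = 8" "length P0' = 8" by (simp_all add: P0_def P0'_def)
  from split3[OF h1] have s1: "p = take i P0" "concat Bs = drop i (take (8 - j) P0)" "q = drop (8 - j) P0" "i + j \<le> 8"
    unfolding i_def j_def l8 by auto
  from split3[OF h2] have s2: "p = take i P0'" "concat Bt = drop i (take (8 - j) P0')" "q = drop (8 - j) P0'"
    unfolding i_def j_def l8 by auto
  have ij: "i \<in> set [0..<9]" "j \<in> set [0..<9]" using s1(4) by auto
  have cond: "i + j \<le> 8 \<and> take i P0 = take i P0' \<and> drop (8 - j) P0 = drop (8 - j) P0'"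
    using s1 s2 by simp
  have Bs1m: "Bs1 \<in> set (decomps (drop i (take (8 - j) P0)))"
    using decomps_complete[of Bs1] c1 s1 ne by simp
  have "set Bt1 \<subseteq> set Bs1" by (rule Krel_set[OF k1 ne(2)])
  then have Bt1m: "Bt1 \<in> set (parses (remdups Bs1) (drop i (take (8 - j) P0')))"
    using parses_complete[of Bt1 _ "remdups Bs1"] c1 s2 ne by simp
  have "bk \<in> set Bs1" using bk unfolding Bs1_def by auto
  then have "\<exists>bk\<in>set Bs1. 2 \<le> length bk" using bk by blast
  then obtain F where F: "F \<in> set (tests Bs1)" "kprod (map F Bs1) \<noteq> kprod (map F Bt1)"
    using F3_check ij cond Bs1m Bt1m by blast
  moreover have "kprod (map F Bs1) = kprod (map F Bt1)"
    using k1 tests_ok[OF F(1)] unfolding Krel_def by blast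
  ultimately show False by simp
qed

lemma F3g:
  assumes ab: "a \<noteq> b"
    and h1: "p @ concat Bs @ q = map (rn a b) P0" and h2: "p @ concat Bt @ q = map (rn a b) P0'"
    and kr: "Krel Bs Bt"
  shows "\<forall>bk\<in>set Bs. length bk \<le> 1"
proof -
  define g where "g x = (if x = a then 0 else (1::nat))" for x
  have m1: "map g (map (rn a b) P0) = P0" "map g (map (rn a b) P0') = P0'"
    using ab by (simp_all add: P0_def P0'_def rn_def g_def)
  have e1: "map g p @ concat (map (map g) Bs) @ map g q = P0"
    using arg_cong[OF h1, of "map g"] m1 by (simp add: map_concat)
  have e2: "map g p @ concat (map (map g) Bt) @ map g q = P0'"
    using arg_cong[OF h2, of "map g"] m1 by (simp add: map_concat)
  have k: "Krel (map (map g) Bs) (map (map g) Bt)"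
    unfolding Krel_def
  proof (intro allI impI)
    fix F :: "nat list \<Rightarrow> kletter list" assume F1: "\<forall>w. F w \<in> kelems" and F2: "F [] = []"
    have "kprod (map (\<lambda>w. F (map g w)) Bs) = kprod (map (\<lambda>w. F (map g w)) Bt)"
      using kr F1 F2 unfolding Krel_def by auto
    then show "kprod (map F (map (map g) Bs)) = kprod (map F (map (map g) Bt))"
      by (simp add: comp_def)
  qed
  have "\<forall>bk\<in>set (map (map g) Bs). length bk \<le> 1" by (rule F3c[OF e1 e2 k])
  then show ?thesis by simp
qed

definition rn3 :: "nat \<Rightarrow> nat \<Rightarrow> nat \<Rightarrow> nat \<Rightarrow> nat" where
  "rn3 a b c x = (if x = 0 then a else if x = 1 then b else c)"

lemma F1g:
  assumes d: "a \<noteq> b" "a \<noteq> c" "b \<noteq> c" and h: "K_sat (map (rn3 a b c) U3) v"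
  shows "v = map (rn3 a b c) U3 \<or> v = map (rn3 a b c) U3'"
proof -
  define g where "g x = (if x = a then 0 else if x = b then 1 else (2::nat))" for x
  have "set v = set (map (rn3 a b c) U3)" using K_sat_mset[OF h] by (metis set_mset_mset)
  then have sv: "set v \<subseteq> {a, b, c}" by (auto simp: U3_def rn3_def)
  have "map g (map (rn3 a b c) U3) = U3" using d by (simp add: U3_def rn3_def g_def)
  then have "K_sat U3 (map g v)" using K_sat_map[OF h, of g] by simp
  then have "map g v = U3 \<or> map g v = U3'" by (rule F1c)
  moreover have "map (rn3 a b c) (map g v) = v"
  proof -
    have "\<forall>x\<in>set v. rn3 a b c (g x) = x" using sv d by (auto simp: rn3_def g_def)
    then show ?thesis by (induction v) auto
  qed
  ultimately show ?thesis by metis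
qed

lemma pj_upt_eq:
  assumes "sorted ys" "distinct ys" "set ys = X \<inter> {0..<n}"
  shows "pj X [0..<n] = ys"
proof -
  have s: "sorted (pj X [0..<n])" unfolding pj_def by (rule sorted_wrt_filter) (rule sorted_upt)
  have d: "distinct (pj X [0..<n])" unfolding pj_def by (rule distinct_filter) (rule distinct_upt)
  have e: "set (pj X [0..<n]) = set ys" using assms(3) unfolding pj_def set_filter set_upt by blast
  show ?thesis by (rule sorted_distinct_set_unique[OF s d assms(1) assms(2) e])
qed
lemma pj_rev: "pj X (rev w) = rev (pj X w)" by (simp add: pj_def rev_filter)
lemma pj_append: "pj X (u @ v) = pj X u @ pj X v" by (simp add: pj_def)
lemma pj_sub: "X \<subseteq> Y \<Longrightarrow> pj X (pj Y w) = pj X w" by (auto simp: pj_def intro: filter_cong)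
lemma pj_comm: "pj {a,b} w = pj {b,a} w" by (simp add: insert_commute)
lemma pj_ssubst: "pj X (ssubst \<sigma> s) = concat (map (\<lambda>z. pj X (\<sigma> z)) s)"
  by (induction s) (auto simp: ssubst_def pj_def)

lemma pj_SS2: "i < j \<Longrightarrow> j < n \<Longrightarrow> pj {i,j} (SS n) = [i,j]"
  unfolding SS_def by (rule pj_upt_eq) auto

lemma pj_SS3: "i < j \<Longrightarrow> j < k \<Longrightarrow> k < n \<Longrightarrow> pj {i,j,k} (SS n) = [i,j,k]"
  unfolding SS_def by (rule pj_upt_eq) auto

lemma pj_uu2:
  assumes "i < j" "j < n"
  shows "pj {i,j} (uu n) = map (rn i j) P0" "pj {i,j} (uu' n) = map (rn i j) P0'"
  using assms by (simp_all add: uu_def uu'_def pj_append pj_rev pj_SS2 P0_def P0'_def rn_def)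

lemma pj_uu3:
  assumes "i < j" "j < k" "k < n"
  shows "pj {i,j,k} (uu n) = map (rn3 i j k) U3"
  using assms by (simp add: uu_def pj_append pj_rev pj_SS3 U3_def rn3_def)

lemma set_uu: "set (uu n) = {0..<n}" by (auto simp: uu_def SS_def)

lemma P0_ne: "a \<noteq> b \<Longrightarrow> map (rn a b) P0 \<noteq> map (rn a b) P0'"
  by (simp add: P0_def P0'_def rn_def)

lemma det:
  assumes "set v \<subseteq> A" "set w \<subseteq> A" "\<forall>a\<in>A. \<exists>b\<in>A. b \<noteq> a"
    "\<forall>a\<in>A. \<forall>b\<in>A. a \<noteq> b \<longrightarrow> pj {a,b} v = pj {a,b} w"
  shows "v = w"
  using assms
proof (induction v arbitrary: w)
  case Nil
  show ?case
  proof (cases w)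
    case (Cons y w')
    then have "y \<in> A" using Nil by auto
    then obtain y' where "y' \<in> A" "y' \<noteq> y" using Nil by blast
    then have "pj {y,y'} [] = pj {y,y'} w" using Nil \<open>y \<in> A\<close> by auto
    then show ?thesis using Cons by (simp add: pj_def)
  qed simp
next
  case (Cons x v)
  show ?case
  proof (cases w)
    case Nil
    have "x \<in> A" using Cons by auto
    then obtain y' where "y' \<in> A" "y' \<noteq> x" using Cons by blast
    then have "pj {x,y'} (x # v) = pj {x,y'} w" using Cons \<open>x \<in> A\<close> by auto
    then show ?thesis using Nil by (simp add: pj_def)
  next
    case (Cons y w')
    have xA: "x \<in> A" and yA: "y \<in> A" using Cons.prems Cons by auto
    have xy: "x = y"
    proof (rule ccontr)
      assume "x \<noteq> y"
      then have "pj {x,y} (x # v) = pj {x,y} w" using Cons.prems xA yA by auto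
      then show False using Cons \<open>x \<noteq> y\<close> by (simp add: pj_def)
    qed
    have "\<forall>a\<in>A. \<forall>b\<in>A. a \<noteq> b \<longrightarrow> pj {a,b} v = pj {a,b} w'"
    proof (intro ballI impI)
      fix a b assume "a \<in> A" "b \<in> A" "a \<noteq> b"
      then have "pj {a,b} (x # v) = pj {a,b} (y # w')" using Cons.prems Cons by auto
      then show "pj {a,b} v = pj {a,b} w'" using xy by (auto simp: pj_def split: if_splits)
    qed
    then have "v = w'" using Cons.IH[of w'] Cons.prems Cons by auto
    then show ?thesis using Cons xy by simp
  qed
qed

lemma pj_uu3':
  assumes "i < j" "j < k" "k < n"
  shows "pj {i,j,k} (uu' n) = map (rn3 i j k) U3'"
  using assms by (simp add: uu'_def pj_append pj_rev pj_SS3 U3'_def rn3_def)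

definition Gd :: "nat \<Rightarrow> nat list \<Rightarrow> nat list \<Rightarrow> nat \<Rightarrow> nat \<Rightarrow> bool" where
  "Gd n u w a b \<longleftrightarrow> pj {a,b} w = pj {a,b} u"

lemma Gd_sym: "Gd n u w a b = Gd n u w b a" by (simp add: Gd_def pj_comm)

lemma triple_sorted:
  assumes Kw: "K_sat (uu n) w" and ijk: "i < j" "j < k" "k < n"
  shows "(Gd n (uu n) w i j \<and> Gd n (uu n) w i k \<and> Gd n (uu n) w j k) \<or>
         (Gd n (uu' n) w i j \<and> Gd n (uu' n) w i k \<and> Gd n (uu' n) w j k)"
proof -
  have "K_sat (pj {i,j,k} (uu n)) (pj {i,j,k} w)" by (rule pj_K[OF Kw])
  then have "K_sat (map (rn3 i j k) U3) (pj {i,j,k} w)" using pj_uu3[OF ijk] by simp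
  then have "pj {i,j,k} w = map (rn3 i j k) U3 \<or> pj {i,j,k} w = map (rn3 i j k) U3'"
    using F1g ijk by simp
  then have "pj {i,j,k} w = pj {i,j,k} (uu n) \<or> pj {i,j,k} w = pj {i,j,k} (uu' n)"
    using pj_uu3[OF ijk] pj_uu3'[OF ijk] by simp
  moreover have "\<And>u. pj {i,j,k} w = pj {i,j,k} u \<Longrightarrow> Gd n u w i j \<and> Gd n u w i k \<and> Gd n u w j k"
  proof -
    fix u assume e: "pj {i,j,k} w = pj {i,j,k} u"
    have "pj {i,j} w = pj {i,j} u" using pj_sub[of "{i,j}" "{i,j,k}" w] pj_sub[of "{i,j}" "{i,j,k}" u] e by auto
    moreover have "pj {i,k} w = pj {i,k} u" using pj_sub[of "{i,k}" "{i,j,k}" w] pj_sub[of "{i,k}" "{i,j,k}" u] e by auto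
    moreover have "pj {j,k} w = pj {j,k} u" using pj_sub[of "{j,k}" "{i,j,k}" w] pj_sub[of "{j,k}" "{i,j,k}" u] e by auto
    ultimately show "Gd n u w i j \<and> Gd n u w i k \<and> Gd n u w j k" by (simp add: Gd_def)
  qed
  ultimately show ?thesis by blast
qed

lemma triple:
  assumes Kw: "K_sat (uu n) w" and d: "a \<noteq> b" "a \<noteq> c" "b \<noteq> c" and l: "a < n" "b < n" "c < n"
  shows "(Gd n (uu n) w a b \<and> Gd n (uu n) w a c \<and> Gd n (uu n) w b c) \<or>
         (Gd n (uu' n) w a b \<and> Gd n (uu' n) w a c \<and> Gd n (uu' n) w b c)"
proof -
  have "a < b \<and> b < c \<or> a < c \<and> c < b \<or> b < a \<and> a < c \<or> b < c \<and> c < a \<or> c < a \<and> a < b \<or> c < b \<and> b < a"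
    using d by linarith
  then show ?thesis
  proof (elim disjE conjE)
    assume "a < b" "b < c" then show ?thesis using triple_sorted[OF Kw, of a b c] l by blast
  next
    assume "a < c" "c < b" then show ?thesis using triple_sorted[OF Kw, of a c b] l Gd_sym by metis
  next
    assume "b < a" "a < c" then show ?thesis using triple_sorted[OF Kw, of b a c] l Gd_sym by metis
  next
    assume "b < c" "c < a" then show ?thesis using triple_sorted[OF Kw, of b c a] l Gd_sym by metis
  next
    assume "c < a" "a < b" then show ?thesis using triple_sorted[OF Kw, of c a b] l Gd_sym by metis
  next
    assume "c < b" "b < a" then show ?thesis using triple_sorted[OF Kw, of c b a] l Gd_sym by metis
  qed
qed

lemma not_both:
  assumes "a \<noteq> b" "a < n" "b < n"
  shows "\<not> (Gd n (uu n) w a b \<and> Gd n (uu' n) w a b)"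
proof -
  have "pj {a,b} (uu n) \<noteq> pj {a,b} (uu' n)"
  proof (cases "a < b")
    case True then show ?thesis using pj_uu2[of a b n] assms P0_ne[of a b] by simp
  next
    case False then have "b < a" using assms by simp
    then show ?thesis using pj_uu2[of b a n] assms P0_ne[of b a] by (simp add: pj_comm)
  qed
  then show ?thesis by (auto simp: Gd_def)
qed

lemma propagate:
  assumes Kw: "K_sat (uu n) w" and n3: "3 \<le> n" and ij: "i \<noteq> j" "i < n" "j < n"
    and bad: "\<not> Gd n (uu n) w i j"
  shows "\<forall>a<n. \<forall>b<n. a \<noteq> b \<longrightarrow> Gd n (uu' n) w a b"
proof -
  have gi: "\<forall>k<n. k \<noteq> i \<longrightarrow> Gd n (uu' n) w i k"
  proof (intro allI impI)
    fix k assume k: "k < n" "k \<noteq> i"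
    show "Gd n (uu' n) w i k"
    proof (cases "k = j")
      case True
      have "\<exists>c\<in>{0::nat,1,2}. c \<noteq> i \<and> c \<noteq> j" by auto
      then obtain c where c0: "c \<in> {0::nat,1,2}" "c \<noteq> i" "c \<noteq> j" by blast
      then have c: "c < n" "c \<noteq> i" "c \<noteq> j" using n3 by auto
      then show ?thesis using triple[OF Kw, of i j c] ij bad True by blast
    next
      case False
      then show ?thesis using triple[OF Kw, of i j k] ij bad k by blast
    qed
  qed
  show ?thesis
  proof (intro allI impI)
    fix a b assume ab: "a < n" "b < n" "a \<noteq> b"
    show "Gd n (uu' n) w a b"
    proof (cases "a = i")
      case True then show ?thesis using gi ab by simp
    next
      case False
      note ai = False
      show ?thesis
      proof (cases "b = i")
        case True then show ?thesis using gi ab Gd_sym by metis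
      next
        case False
        have "Gd n (uu' n) w i a" using gi ab ai by auto
        then have "\<not> Gd n (uu n) w i a" using not_both[of i a n w] ab ij ai by auto
        then show ?thesis using triple[OF Kw, of i a b] ab ai False ij by blast
      qed
    qed
  qed
qed

lemma pair_single:
  assumes h: "p @ ssubst \<sigma> s @ q = uu n" and w: "w = p @ ssubst \<sigma> t @ q" and st: "K_sat s t"
    and ab: "a < b" "b < n" and G': "Gd n (uu' n) w a b"
  shows "\<forall>z\<in>set s. length (pj {a,b} (\<sigma> z)) \<le> 1"
proof -
  have e1: "pj {a,b} p @ concat (map (\<lambda>z. pj {a,b} (\<sigma> z)) s) @ pj {a,b} q = map (rn a b) P0"
    using arg_cong[OF h, of "pj {a,b}"] pj_uu2[OF ab] by (simp add: pj_append pj_ssubst)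
  have e2: "pj {a,b} p @ concat (map (\<lambda>z. pj {a,b} (\<sigma> z)) t) @ pj {a,b} q = map (rn a b) P0'"
    using G' pj_uu2[OF ab] unfolding Gd_def w by (simp add: pj_append pj_ssubst)
  have k: "Krel (map (\<lambda>z. pj {a,b} (\<sigma> z)) s) (map (\<lambda>z. pj {a,b} (\<sigma> z)) t)"
    by (rule K_sat_Krel[OF st])
  have "\<forall>bk\<in>set (map (\<lambda>z. pj {a,b} (\<sigma> z)) s). length bk \<le> 1"
    by (rule F3g[OF _ e1 e2 k]) (use ab in simp)
  then show ?thesis by simp
qed

lemma filter_single: "pj {y} u = replicate (count_list u y) y"
  by (induction u) (auto simp: pj_def)

lemma ssubst_single_hd:
  assumes "\<forall>z\<in>set s. \<sigma> z = [hd (\<sigma> z)]"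
  shows "ssubst \<sigma> s = map (\<lambda>z. hd (\<sigma> z)) s"
  using assms
proof (induction s)
  case Nil then show ?case by (simp add: ssubst_def)
next
  case (Cons a s)
  then have a: "\<sigma> a = [hd (\<sigma> a)]" and r: "ssubst \<sigma> s = map (\<lambda>z. hd (\<sigma> z)) s" by auto
  have "ssubst \<sigma> (a # s) = \<sigma> a @ ssubst \<sigma> s" by (simp add: ssubst_def)
  also have "\<dots> = [hd (\<sigma> a)] @ map (\<lambda>z. hd (\<sigma> z)) s" using a r by simp
  finally show ?case by simp
qed

lemma lemmaR:
  assumes n3: "3 \<le> n" and h: "p @ ssubst \<sigma> s @ q = uu n" and st: "K_sat s t"
    and ne: "\<forall>x. \<sigma> x \<noteq> []" and card: "card (set s) < n"
  shows "p @ ssubst \<sigma> t @ q = uu n"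
proof -
  define w where "w = p @ ssubst \<sigma> t @ q"
  have Kw: "K_sat (uu n) w" using K_sat_ctx[OF st, of p \<sigma> q] h unfolding w_def by simp
  have sw: "set w = {0..<n}" using K_sat_mset[OF Kw] set_uu by (metis set_mset_mset)
  show ?thesis
  proof (cases "\<forall>a<n. \<forall>b<n. a \<noteq> b \<longrightarrow> Gd n (uu n) w a b")
    case True
    have "w = uu n"
    proof (rule det[of w "{0..<n}" "uu n"])
      show "set w \<subseteq> {0..<n}" using sw by simp
      show "set (uu n) \<subseteq> {0..<n}" using set_uu by simp
      show "\<forall>a\<in>{0..<n}. \<exists>b\<in>{0..<n}. b \<noteq> a"
      proof
        fix a assume "a \<in> {0..<n}"
        show "\<exists>b\<in>{0..<n}. b \<noteq> a"
        proof (cases "a = 0")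
          case True then show ?thesis using n3 by (intro bexI[of _ 1]) auto
        next
          case False then show ?thesis using n3 by (intro bexI[of _ 0]) auto
        qed
      qed
      show "\<forall>a\<in>{0..<n}. \<forall>b\<in>{0..<n}. a \<noteq> b \<longrightarrow> pj {a,b} w = pj {a,b} (uu n)"
        using True by (auto simp: Gd_def)
    qed
    then show ?thesis using w_def by simp
  next
    case False
    then obtain i j where ij: "i < n" "j < n" "i \<noteq> j" "\<not> Gd n (uu n) w i j" by blast
    have allb: "\<forall>a<n. \<forall>b<n. a \<noteq> b \<longrightarrow> Gd n (uu' n) w a b"
      by (rule propagate[OF Kw n3 ij(3) ij(1) ij(2) ij(4)])
    have sgl: "\<And>a b. a < n \<Longrightarrow> b < n \<Longrightarrow> a \<noteq> b \<Longrightarrow> \<forall>z\<in>set s. length (pj {a,b} (\<sigma> z)) \<le> 1"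
    proof -
      fix a b assume ab: "a < n" "b < n" "a \<noteq> b"
      show "\<forall>z\<in>set s. length (pj {a,b} (\<sigma> z)) \<le> 1"
      proof (cases "a < b")
        case True then show ?thesis using pair_single[OF h w_def st True ab(2)] allb ab by blast
      next
        case False then have "b < a" using ab by simp
        then have "\<forall>z\<in>set s. length (pj {b,a} (\<sigma> z)) \<le> 1"
          using pair_single[OF h w_def st _ ab(1)] allb ab by blast
        then show ?thesis by (simp add: pj_comm)
      qed
    qed
    have letters: "\<And>z. z \<in> set s \<Longrightarrow> set (\<sigma> z) \<subseteq> {0..<n}"
    proof -
      fix z assume "z \<in> set s"
      then have "set (\<sigma> z) \<subseteq> set (ssubst \<sigma> s)" by (auto simp: ssubst_def)
      also have "\<dots> \<subseteq> set (uu n)" unfolding h[symmetric] by auto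
      finally show "set (\<sigma> z) \<subseteq> {0..<n}" using set_uu by simp
    qed
    have one: "\<forall>z\<in>set s. \<sigma> z = [hd (\<sigma> z)]"
    proof
      fix z assume z: "z \<in> set s"
      show "\<sigma> z = [hd (\<sigma> z)]"
      proof (cases "\<sigma> z")
        case Nil then show ?thesis using ne by simp
      next
        case (Cons x0 r)
        show ?thesis
        proof (cases r)
          case Nil then show ?thesis using Cons by simp
        next
          case (Cons x1 r')
          have x01: "x0 < n" "x1 < n" using letters[OF z] \<open>\<sigma> z = x0 # r\<close> Cons by auto
          have "\<exists>a b. a < n \<and> b < n \<and> a \<noteq> b \<and> x0 \<in> {a,b} \<and> x1 \<in> {a,b}"
          proof (cases "x0 = x1")
            case True
            show ?thesis
            proof (cases "x0 = 0")
              case True then show ?thesis using \<open>x0 = x1\<close> n3 by (intro exI[of _ 0] exI[of _ 1]) auto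
            next
              case False then show ?thesis using \<open>x0 = x1\<close> x01 by (intro exI[of _ x0] exI[of _ 0]) auto
            qed
          next
            case False then show ?thesis using x01 by blast
          qed
          then obtain a b where abp: "a < n" "b < n" "a \<noteq> b" "x0 \<in> {a,b}" "x1 \<in> {a,b}" by blast
          have "length (pj {a,b} (\<sigma> z)) \<le> 1" using sgl[OF abp(1-3)] z by blast
          moreover have "length (pj {a,b} (\<sigma> z)) \<ge> 2"
            using abp \<open>\<sigma> z = x0 # r\<close> Cons by (simp add: pj_def)
          ultimately show ?thesis by simp
        qed
      qed
    qed
    have cov: "{0..<n} \<subseteq> set (ssubst \<sigma> s)"
    proof
      fix x assume x: "x \<in> {0..<n}"
      show "x \<in> set (ssubst \<sigma> s)"
      proof (rule ccontr)
        assume nx: "x \<notin> set (ssubst \<sigma> s)"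
        define y where "y = (if x = 0 then 1 else (0::nat))"
        have y: "y < n" "y \<noteq> x" using n3 by (auto simp: y_def)
        have Kst: "K_sat (ssubst \<sigma> s) (ssubst \<sigma> t)" using K_sat_ctx[OF st, of "[]" \<sigma> "[]"] by simp
        have ms: "mset (ssubst \<sigma> s) = mset (ssubst \<sigma> t)" by (rule K_sat_mset[OF Kst])
        then have nxt: "x \<notin> set (ssubst \<sigma> t)" using nx by (metis set_mset_mset)
        have cnt: "count_list (ssubst \<sigma> s) y = count_list (ssubst \<sigma> t) y" by (rule K_sat_count[OF Kst])
        have "\<And>u. x \<notin> set u \<Longrightarrow> pj {x,y} u = pj {y} u" by (auto simp: pj_def intro: filter_cong)
        then have "pj {x,y} (ssubst \<sigma> s) = pj {x,y} (ssubst \<sigma> t)"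
          using nx nxt cnt by (simp add: filter_single)
        then have "pj {x,y} w = pj {x,y} (uu n)" unfolding w_def h[symmetric] by (simp add: pj_append)
        then have "Gd n (uu n) w x y" by (simp add: Gd_def)
        moreover have "Gd n (uu' n) w x y" using allb x y by auto
        ultimately show False using not_both[of x y n w] x y by auto
      qed
    qed
    have "ssubst \<sigma> s = map (\<lambda>z. hd (\<sigma> z)) s" by (rule ssubst_single_hd[OF one])
    then have "card (set (ssubst \<sigma> s)) \<le> card (set s)" by (simp add: card_image_le)
    moreover have "n \<le> card (set (ssubst \<sigma> s))" using card_mono[OF _ cov] by simp
    ultimately show ?thesis using card by simp
  qed
qed

lemma ssubst_append: "ssubst \<sigma> (a @ b) = ssubst \<sigma> a @ ssubst \<sigma> b"
  by (simp add: ssubst_def)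

lemma ssubst_comp: "ssubst \<sigma> (ssubst \<tau> u) = ssubst (\<lambda>x. ssubst \<sigma> (\<tau> x)) u"
  by (induction u) (simp_all add: ssubst_def)

lemma ssubst_ne: "(\<forall>x. \<sigma> x \<noteq> []) \<Longrightarrow> w \<noteq> [] \<Longrightarrow> ssubst \<sigma> w \<noteq> []"
  by (cases w) (auto simp: ssubst_def)

lemma ssubst_id: "ssubst (\<lambda>x. [x]) w = w"
  by (induction w) (simp_all add: ssubst_def)

lemma deriv_inv:
  assumes d: "derivable \<Sigma> u v"
    and axs: "\<forall>(a,b)\<in>\<Sigma>. K_sat a b \<and> card (set a) < n \<and> card (set b) < n" and n3: "3 \<le> n"
  shows "\<forall>\<sigma> p q. (\<forall>x. \<sigma> x \<noteq> []) \<longrightarrow> (p @ ssubst \<sigma> u @ q = uu n \<longleftrightarrow> p @ ssubst \<sigma> v @ q = uu n)"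
  using d
proof (induction rule: derivable.induct)
  case (ax u v)
  then have k: "K_sat u v" "card (set u) < n" "card (set v) < n" using axs by auto
  show ?case
  proof (intro allI impI iffI)
    fix \<sigma> :: "nat \<Rightarrow> nat list" and p q :: "nat list" assume ne: "\<forall>x. \<sigma> x \<noteq> []"
    { assume "p @ ssubst \<sigma> u @ q = uu n"
      then show "p @ ssubst \<sigma> v @ q = uu n" by (rule lemmaR[OF n3 _ k(1) ne k(2)]) }
    { assume "p @ ssubst \<sigma> v @ q = uu n"
      then show "p @ ssubst \<sigma> u @ q = uu n" by (rule lemmaR[OF n3 _ K_sat_sym[OF k(1)] ne k(3)]) }
  qed
next
  case (refl u) then show ?case by simp
next
  case (sym u v)
  show ?case
  proof (intro allI impI)
    fix \<sigma> :: "nat \<Rightarrow> nat list" and p q :: "nat list" assume ne: "\<forall>x. \<sigma> x \<noteq> []"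
    have "p @ ssubst \<sigma> u @ q = uu n \<longleftrightarrow> p @ ssubst \<sigma> v @ q = uu n" by (rule sym.IH[rule_format, OF ne[rule_format]])
    then show "p @ ssubst \<sigma> v @ q = uu n \<longleftrightarrow> p @ ssubst \<sigma> u @ q = uu n" by (rule HOL.sym)
  qed
next
  case (trans u v w)
  show ?case
  proof (intro allI impI)
    fix \<sigma> :: "nat \<Rightarrow> nat list" and p q :: "nat list" assume ne: "\<forall>x. \<sigma> x \<noteq> []"
    have "p @ ssubst \<sigma> u @ q = uu n \<longleftrightarrow> p @ ssubst \<sigma> v @ q = uu n" by (rule trans.IH(1)[rule_format, OF ne[rule_format]])
    moreover have "p @ ssubst \<sigma> v @ q = uu n \<longleftrightarrow> p @ ssubst \<sigma> w @ q = uu n" by (rule trans.IH(2)[rule_format, OF ne[rule_format]])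
    ultimately show "p @ ssubst \<sigma> u @ q = uu n \<longleftrightarrow> p @ ssubst \<sigma> w @ q = uu n" by (rule HOL.trans)
  qed
next
  case (subst u v \<tau>)
  show ?case
  proof (intro allI impI)
    fix \<sigma> :: "nat \<Rightarrow> nat list" and p q :: "nat list" assume ne: "\<forall>x. \<sigma> x \<noteq> []"
    have ne': "\<forall>x. ssubst \<sigma> (\<tau> x) \<noteq> []" using ne subst.hyps(2) ssubst_ne by blast
    show "p @ ssubst \<sigma> (ssubst \<tau> u) @ q = uu n \<longleftrightarrow> p @ ssubst \<sigma> (ssubst \<tau> v) @ q = uu n"
      unfolding ssubst_comp by (rule subst.IH[rule_format, OF ne'[rule_format]])
  qed
next
  case (cong u v p' q')
  show ?case
  proof (intro allI impI)
    fix \<sigma> :: "nat \<Rightarrow> nat list" and p q :: "nat list" assume ne: "\<forall>x. \<sigma> x \<noteq> []"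
    have "(p @ ssubst \<sigma> p') @ ssubst \<sigma> u @ (ssubst \<sigma> q' @ q) = uu n \<longleftrightarrow>
          (p @ ssubst \<sigma> p') @ ssubst \<sigma> v @ (ssubst \<sigma> q' @ q) = uu n"
      by (rule cong.IH[rule_format, OF ne[rule_format]])
    then show "p @ ssubst \<sigma> (p' @ u @ q') @ q = uu n \<longleftrightarrow> p @ ssubst \<sigma> (p' @ v @ q') @ q = uu n"
      by (simp add: ssubst_append)
  qed
qed

theorem theorem1:
  shows "\<not> (\<exists>\<Sigma>. finite \<Sigma>
              \<and> (\<forall>(u, v) \<in> \<Sigma>. u \<noteq> [] \<and> v \<noteq> [] \<and> K_sat u v)
              \<and> (\<forall>u v. u \<noteq> [] \<longrightarrow> v \<noteq> [] \<longrightarrow> K_sat u v \<longrightarrow> derivable \<Sigma> u v))"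
proof
  assume "\<exists>\<Sigma>. finite \<Sigma>
              \<and> (\<forall>(u, v) \<in> \<Sigma>. u \<noteq> [] \<and> v \<noteq> [] \<and> K_sat u v)
              \<and> (\<forall>u v. u \<noteq> [] \<longrightarrow> v \<noteq> [] \<longrightarrow> K_sat u v \<longrightarrow> derivable \<Sigma> u v)"
  then obtain \<Sigma> where fin: "finite \<Sigma>" and sat: "\<forall>(u, v) \<in> \<Sigma>. u \<noteq> [] \<and> v \<noteq> [] \<and> K_sat u v"
    and comp: "\<forall>u v. u \<noteq> [] \<longrightarrow> v \<noteq> [] \<longrightarrow> K_sat u v \<longrightarrow> derivable \<Sigma> u v" by blast
  define m where "m = (\<Sum>e\<in>\<Sigma>. card (set (fst e)) + card (set (snd e)))"
  define n where "n = m + 3"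
  have n3: "3 \<le> n" by (simp add: n_def)
  have bound: "\<forall>(a,b)\<in>\<Sigma>. K_sat a b \<and> card (set a) < n \<and> card (set b) < n"
  proof (intro ballI)
    fix e assume e: "e \<in> \<Sigma>"
    obtain a b where ab: "e = (a,b)" by (cases e)
    have "card (set (fst e)) + card (set (snd e)) \<le> m"
      unfolding m_def using e fin by (intro member_le_sum) auto
    then have "card (set a) < n \<and> card (set b) < n" using ab by (simp add: n_def)
    then show "case e of (a, b) \<Rightarrow> K_sat a b \<and> card (set a) < n \<and> card (set b) < n"
      using sat e ab by auto
  qed
  have ne: "uu n \<noteq> []" "uu' n \<noteq> []" using n3 by (auto simp: uu_def uu'_def SS_def)
  have d: "derivable \<Sigma> (uu n) (uu' n)" using comp ne K_sat_uu by simp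
  have "[] @ ssubst (\<lambda>x. [x]) (uu n) @ [] = uu n \<longleftrightarrow> [] @ ssubst (\<lambda>x. [x]) (uu' n) @ [] = uu n"
    using deriv_inv[OF d bound n3, THEN spec[of _ "\<lambda>x. [x]"], THEN spec[of _ "[]"], THEN spec[of _ "[]"]]
    by simp
  then have "uu' n = uu n" by (simp add: ssubst_id)
  then show False using uu_ne[of n] n3 by simp
qed

end
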